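(* Let $F:\mathrm{Dens}(\mathcal X)\to\mathbb R$ be convex and let $\{d_\rho\in\overline\partial F(\rho)\}_{\rho\in\mathrm{Dens}(\mathcal X)}$ be a selection of extended subgradients. Then there exists a truthful quantum score $S$ such that $S(\rho';\rho)=F(\rho')+\langle d_{\rho'},\rho-\rho'\rangle$ for all $\rho,\rho'\in\mathrm{Dens}(\mathcal X)$.
   Context: Let $\mathcal X=\mathbb C^n$, $\mathrm{Herm}(\mathcal X)$ the Hermitian matrices with $\langle X,Y\rangle=\mathrm{Tr}(X^*Y)$, $\mathrm{Pos}(\mathcal X)$ the positive semidefinite ones, $\mathrm{Dens}(\mathcal X)$ the trace-one elements of $\mathrm{Pos}(\mathcal X)$. A measurement with finite outcome set $\mathcal Y\subseteq\mathbb N$ is $\mu=\{\mu_y\}_{y\in\mathcal Y}\subseteq\mathrm{Pos}(\mathcal X)$ with $\sum_y\mu_y=I$. A quantum score is $S=(s,\mu)$ with $s:\mathrm{Dens}(\mathcal X)\times\mathbb N\to\mathbb R\cup\{\pm\infty\}$, $\mu:\mathrm{Dens}(\mathcal X)\to\mathrm{Meas}(\mathcal X)$, expected score $S(\rho';\rho)=\sum_y\langle\mu(\rho')_y,\rho\rangle s(\rho',y)$ ($0\cdot\pm\infty=0$); truthful if $S(\rho;\rho)\ge S(\rho';\rho)$ for all $\rho,\rho'$. Extended linear functions $\ell:\mathrm{Herm}(\mathcal X)\to\overline{\mathbb R}$: $\ell(\alpha v)=\alpha\ell(v)$ for real $\alpha$, $\ell(v+v')=\ell(v)+\ell(v')$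 whenever $\{\ell(v),\ell(v')\}\ne\{\infty,-\infty\}$. $\overline\partial F(\rho)$ is the set of extended linear $d$ with $F(\rho')\ge F(\rho)+\langle d,\rho'-\rho\rangle$ for all $\rho'\in\mathrm{Dens}(\mathcal X)$; a selection of extended subgradients is a family $\{d_\rho\in\overline\partial F(\rho)\}$ with $\langle d_\rho,\tau-\rho\rangle\in\mathbb R\cup\{-\infty\}$ for all $\rho,\tau\in\mathrm{Dens}(\mathcal X)$. *)

theory Defs
  imports "HOL-Analysis.Analysis" "HOL-Library.Extended_Real"
begin

text \<open>The space X = C^n is modelled by the finite index type 'n; operators on X are
  complex matrices of type complex^'n^'n.\<close>

type_synonym 'n cmat = "complex^'n^'n"

definition adj :: "'n::finite cmat \<Rightarrow> 'n cmat" where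
  "adj A = (\<chi> i j. cnj (A $ j $ i))"

definition hermitian :: "'n::finite cmat \<Rightarrow> bool" where
  "hermitian A \<longleftrightarrow> adj A = A"

text \<open>Hilbert-Schmidt inner product Tr(X^* Y); it is real on Hermitian matrices,
  so we take the real part.\<close>
definition hs_inner :: "'n::finite cmat \<Rightarrow> 'n cmat \<Rightarrow> real" where
  "hs_inner X Y = Re (trace (adj X ** Y))"

definition psd :: "'n::finite cmat \<Rightarrow> bool" where
  "psd A \<longleftrightarrow> hermitian A \<and>
     (\<forall>v::complex^'n. 0 \<le> Re (\<Sum>i\<in>UNIV. cnj (v $ i) * (A *v v) $ i))"

definition Dens :: "'n::finite cmat set" where
  "Dens = {A. psd A \<and> trace A = 1}"

type_synonym 'n meas = "nat set \<times> (nat \<Rightarrow> 'n cmat)"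

definition is_measurement :: "'n::finite meas \<Rightarrow> bool" where
  "is_measurement M \<longleftrightarrow> finite (fst M) \<and> (\<forall>y\<in>fst M. psd (snd M y))
      \<and> (\<Sum>y\<in>fst M. snd M y) = mat 1"

definition is_quantum_score :: "('n::finite cmat \<Rightarrow> nat \<Rightarrow> ereal) \<Rightarrow> ('n cmat \<Rightarrow> 'n meas) \<Rightarrow> bool" where
  "is_quantum_score s \<mu> \<longleftrightarrow> (\<forall>\<rho>\<in>Dens. is_measurement (\<mu> \<rho>))"

text \<open>Expected score S(rho'; rho); in ereal, 0 * (+-infinity) = 0.\<close>
definition expected_score ::
  "('n::finite cmat \<Rightarrow> nat \<Rightarrow> ereal) \<Rightarrow> ('n cmat \<Rightarrow> 'n meas) \<Rightarrow> 'n cmat \<Rightarrow> 'n cmat \<Rightarrow> ereal" where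
  "expected_score s \<mu> \<rho>' \<rho> =
     (\<Sum>y\<in>fst (\<mu> \<rho>'). ereal (hs_inner (snd (\<mu> \<rho>') y) \<rho>) * s \<rho>' y)"

definition truthful :: "('n::finite cmat \<Rightarrow> nat \<Rightarrow> ereal) \<Rightarrow> ('n cmat \<Rightarrow> 'n meas) \<Rightarrow> bool" where
  "truthful s \<mu> \<longleftrightarrow> (\<forall>\<rho>\<in>Dens. \<forall>\<rho>'\<in>Dens. expected_score s \<mu> \<rho>' \<rho> \<le> expected_score s \<mu> \<rho> \<rho>)"

text \<open>Extended linear functions Herm(X) \<rightarrow> [-\<infinity>,\<infinity>] (only values on Hermitian
  matrices matter).\<close>
definition ext_linear :: "('n::finite cmat \<Rightarrow> ereal) \<Rightarrow> bool" where
  "ext_linear l \<longleftrightarrow>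
     (\<forall>v. hermitian v \<longrightarrow> (\<forall>\<alpha>::real. l (\<alpha> *\<^sub>R v) = ereal \<alpha> * l v)) \<and>
     (\<forall>v v'. hermitian v \<longrightarrow> hermitian v' \<longrightarrow> {l v, l v'} \<noteq> {\<infinity>, -\<infinity>} \<longrightarrow>
        l (v + v') = l v + l v')"

definition ext_subdiff :: "('n::finite cmat \<Rightarrow> real) \<Rightarrow> 'n cmat \<Rightarrow> ('n cmat \<Rightarrow> ereal) set" where
  "ext_subdiff F \<rho> = {d. ext_linear d \<and>
      (\<forall>\<rho>'\<in>Dens. ereal (F \<rho>') \<ge> ereal (F \<rho>) + d (\<rho>' - \<rho>))}"

definition selection_ext_subgradients ::
  "('n::finite cmat \<Rightarrow> real) \<Rightarrow> ('n cmat \<Rightarrow> 'n cmat \<Rightarrow> ereal) \<Rightarrow> bool" where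
  "selection_ext_subgradients F d \<longleftrightarrow>
     (\<forall>\<rho>\<in>Dens. d \<rho> \<in> ext_subdiff F \<rho>) \<and>
     (\<forall>\<rho>\<in>Dens. \<forall>\<tau>\<in>Dens. d \<rho> (\<tau> - \<rho>) \<noteq> \<infinity>)"

end

theory Submission
  imports Defs
begin


definition cf :: "'n::finite cmat \<Rightarrow> complex^'n \<Rightarrow> complex^'n \<Rightarrow> complex" where
  "cf A x y = (\<Sum>i\<in>UNIV. cnj (x $ i) * (A *v y) $ i)"

definition qf :: "'n::finite cmat \<Rightarrow> complex^'n \<Rightarrow> real" where
  "qf A x = Re (cf A x x)"

lemma psd_qf: "psd A \<longleftrightarrow> hermitian A \<and> (\<forall>v. 0 \<le> qf A v)"
  by (simp add: psd_def qf_def cf_def)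

lemma inner_complex_cnj: "inner (a::complex) b = Re (cnj a * b)"
  by (simp add: inner_complex_def)

lemma qf_inner: "qf A x = inner x (A *v x)"
  by (simp add: qf_def cf_def inner_vec_def inner_complex_cnj Re_sum)

lemma hs_inner_inner: "hs_inner X Y = inner X Y"
proof -
  have "hs_inner X Y = (\<Sum>i\<in>UNIV. \<Sum>k\<in>UNIV. Re (cnj (X$k$i) * Y$k$i))"
    by (simp add: hs_inner_def trace_def matrix_matrix_mult_def adj_def Re_sum)
  also have "\<dots> = (\<Sum>k\<in>UNIV. \<Sum>i\<in>UNIV. Re (cnj (X$k$i) * Y$k$i))" by (rule sum.swap)
  also have "\<dots> = inner X Y" by (simp add: inner_vec_def inner_complex_cnj)
  finally show ?thesis .
qed

lemma hermitian_iff: "hermitian A \<longleftrightarrow> (\<forall>i j. A $ i $ j = cnj (A $ j $ i))"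
proof
  assume "hermitian A"
  hence e: "adj A $ i $ j = A $ i $ j" for i j by (simp add: hermitian_def)
  have "A $ i $ j = cnj (A $ j $ i)" for i j using e[of i j] unfolding adj_def by simp
  thus "\<forall>i j. A $ i $ j = cnj (A $ j $ i)" by blast
next
  assume h: "\<forall>i j. A $ i $ j = cnj (A $ j $ i)"
  show "hermitian A" unfolding hermitian_def
  proof (rule vec_eq_iff[THEN iffD2], intro allI, rule vec_eq_iff[THEN iffD2], intro allI)
    fix i j show "adj A $ i $ j = A $ i $ j" by (simp add: adj_def h[rule_format, of i j])
  qed
qed

lemma mv_add: "(A + B) *v x = A *v x + B *v (x :: complex^'n::finite)"
  by (simp add: matrix_vector_mult_def vec_eq_iff sum.distrib algebra_simps)
lemma mv_diff: "(A - B) *v x = A *v x - B *v (x :: complex^'n::finite)"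
  by (simp add: matrix_vector_mult_def vec_eq_iff sum_subtractf algebra_simps)
lemma mv_scaleR: "(c *\<^sub>R A) *v x = c *\<^sub>R (A *v (x :: complex^'n::finite))"
  by (simp add: matrix_vector_mult_def vec_eq_iff scaleR_sum_right)
lemma mv_vadd: "A *v (x + y) = A *v x + A *v (y :: complex^'n::finite)"
  by (simp add: matrix_vector_mult_def vec_eq_iff sum.distrib algebra_simps)
lemma mv_vscaleR: "A *v (c *\<^sub>R x) = c *\<^sub>R (A *v (x :: complex^'n::finite))"
  by (simp add: matrix_vector_mult_def vec_eq_iff scaleR_sum_right)
lemma mv_vscale: "A *v (c *s x) = c *s (A *v (x :: complex^'n::finite))"
  by (simp add: matrix_vector_mult_def vec_eq_iff sum_distrib_left algebra_simps)
lemma mv_one: "mat 1 *v x = (x :: complex^'n::finite)"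
  by simp
lemma mv_sum: "finite S \<Longrightarrow> (\<Sum>b\<in>S. M b) *v x = (\<Sum>b\<in>S. M b *v (x :: complex^'n::finite))"
  by (induction S rule: finite_induct) (auto simp: mv_add)

lemma linear_mv: "linear (\<lambda>x::complex^'n::finite. A *v x)"
  by (rule linearI) (simp_all add: mv_vadd mv_vscaleR)

lemma cf_herm: assumes "hermitian A" shows "cf A x y = cnj (cf A y x)"
proof -
  have h: "\<And>i j. cnj (A$i$j) = A$j$i" using assms by (metis hermitian_iff complex_cnj_cnj)
  have "cf A x y = (\<Sum>i\<in>UNIV. \<Sum>j\<in>UNIV. cnj (x$i) * A$i$j * y$j)"
    by (simp add: cf_def matrix_vector_mult_def sum_distrib_left mult_ac)
  moreover have "cnj (cf A y x) = (\<Sum>i\<in>UNIV. \<Sum>j\<in>UNIV. y$i * A$j$i * cnj (x$j))"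
    by (simp add: cf_def matrix_vector_mult_def sum_distrib_left mult_ac h)
  moreover have "(\<Sum>i\<in>UNIV. \<Sum>j\<in>UNIV. y$i * A$j$i * cnj (x$j)) = (\<Sum>j\<in>UNIV. \<Sum>i\<in>UNIV. y$i * A$j$i * cnj (x$j))"
    by (rule sum.swap)
  ultimately show ?thesis by (simp add: mult_ac)
qed

lemma cf_add_left: "cf A (x + y) z = cf A x z + cf A y z"
  by (simp add: cf_def sum.distrib algebra_simps)
lemma cf_add_right: "cf A z (x + y) = cf A z x + cf A z y"
  by (simp add: cf_def mv_vadd sum.distrib algebra_simps)
lemma cf_zero_right: "A *v y = 0 \<Longrightarrow> cf A x y = 0"
  by (simp add: cf_def)

lemma qf_add_mat: "qf (A + B) x = qf A x + qf B x"
  by (simp add: qf_inner mv_add inner_add_right)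
lemma qf_diff_mat: "qf (A - B) x = qf A x - qf B x"
  by (simp add: qf_inner mv_diff inner_diff_right)
lemma qf_scaleR_mat: "qf (c *\<^sub>R A) x = c * qf A x"
  by (simp add: qf_inner mv_scaleR)
lemma qf_scaleR_vec: "qf A (c *\<^sub>R x) = c^2 * qf A x"
  by (simp add: qf_inner mv_vscaleR power2_eq_square)
lemma qf_one: "qf (mat 1) x = norm x ^ 2"
  by (simp add: qf_inner power2_norm_eq_inner)
lemma qf_sum_mat: "finite S \<Longrightarrow> qf (\<Sum>b\<in>S. M b) x = (\<Sum>b\<in>S. qf (M b) x)"
  by (simp add: qf_inner mv_sum inner_sum_right)

lemma adj_add: "adj (A + B) = adj A + adj B" by (simp add: adj_def vec_eq_iff)
lemma adj_diff: "adj (A - B) = adj A - adj B" by (simp add: adj_def vec_eq_iff)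
lemma adj_scaleR: "adj (c *\<^sub>R A) = c *\<^sub>R adj A" by (simp add: adj_def vec_eq_iff)
lemma adj_one: "adj (mat 1 :: 'n::finite cmat) = mat 1" by (simp add: adj_def vec_eq_iff mat_def)
lemma adj_sum: "finite S \<Longrightarrow> adj (\<Sum>b\<in>S. M b) = (\<Sum>b\<in>S. adj (M b))"
  by (induction S rule: finite_induct) (auto simp: adj_add, simp add: adj_def vec_eq_iff)

lemma herm_add: "hermitian A \<Longrightarrow> hermitian B \<Longrightarrow> hermitian (A + B)" by (simp add: hermitian_def adj_add)
lemma herm_diff: "hermitian A \<Longrightarrow> hermitian B \<Longrightarrow> hermitian (A - B)" by (simp add: hermitian_def adj_diff)
lemma herm_scaleR: "hermitian A \<Longrightarrow> hermitian (c *\<^sub>R A)" by (simp add: hermitian_def adj_scaleR)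
lemma herm_one: "hermitian (mat 1 :: 'n::finite cmat)" by (simp add: hermitian_def adj_one)
lemma herm_sum: "finite S \<Longrightarrow> (\<And>b. b \<in> S \<Longrightarrow> hermitian (M b)) \<Longrightarrow> hermitian (\<Sum>b\<in>S. M b)"
  by (simp add: hermitian_def adj_sum)



lemma inner_mv_cf: "inner x (A *v y) = Re (cf A x y)"
  by (simp add: cf_def inner_vec_def inner_complex_cnj Re_sum)

lemma inner_mv_sym: "hermitian A \<Longrightarrow> inner x (A *v y) = inner y (A *v x)"
  by (simp add: inner_mv_cf cf_herm[of A x y])

lemma quad_zero:
  fixes a M :: real
  assumes "a \<ge> 0" "M \<ge> 0" "\<And>t. 0 \<le> -2*t*a + t^2*M"
  shows "a = 0"
proof (rule ccontr)
  assume "a \<noteq> 0" hence a: "a > 0" using assms by auto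
  define t where "t = a / (M+1)"
  have t: "t > 0" using a assms by (simp add: t_def)
  have "t * M \<le> a" using assms a unfolding t_def by (simp add: field_simps)
  hence "t^2*M \<le> t*a" using t by (simp add: power2_eq_square mult.assoc mult_left_mono)
  moreover have "0 \<le> -2*t*a + t^2*M" by fact
  ultimately have "t*a \<le> 0" by linarith
  moreover have "t*a > 0" using t a by simp
  ultimately show False by linarith
qed

lemma psd_ker:
  assumes "psd A" "qf A x = 0"
  shows "A *v x = 0"
proof -
  define u where "u = A *v x"
  have h: "hermitian A" and pos: "\<And>v. 0 \<le> qf A v" using assms(1) by (auto simp: psd_qf)
  have "\<And>t. 0 \<le> -2*t*(inner u u) + t^2 * inner u (A *v u)"
  proof -
    fix t :: real
    have "qf A (x - t *\<^sub>R u) = inner (x - t *\<^sub>R u) (A *v x - t *\<^sub>R (A *v u))"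
      by (simp add: qf_inner mv_vadd mv_vscaleR diff_conv_add_uminus flip: scaleR_minus_left)
    also have "\<dots> = qf A x - t * inner x (A *v u) - t * inner u (A *v x) + t^2 * inner u (A *v u)"
      by (simp add: qf_inner inner_diff_left inner_diff_right power2_eq_square algebra_simps)
    also have "\<dots> = -2*t*(inner u u) + t^2 * inner u (A *v u)"
      using assms(2) inner_mv_sym[OF h, of x u] by (simp add: u_def)
    finally show "0 \<le> -2*t*(inner u u) + t^2 * inner u (A *v u)" using pos[of "x - t *\<^sub>R u"] by simp
  qed
  moreover have "0 \<le> inner u (A *v u)" using pos[of u] by (simp add: qf_inner)
  ultimately have "inner u u = 0" using quad_zero[of "inner u u" "inner u (A *v u)"] by simp
  thus ?thesis by (simp add: u_def)
qed

definition msum :: "'n::finite cmat \<Rightarrow> real" where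
  "msum A = (\<Sum>i\<in>UNIV. \<Sum>j\<in>UNIV. norm (A $ i $ j))"

lemma msum_nonneg: "0 \<le> msum A"
  by (simp add: msum_def sum_nonneg)

lemma norm_mv_le: "norm (A *v x) \<le> msum A * norm (x::complex^'n::finite)"
proof -
  have "norm (A *v x) \<le> (\<Sum>i\<in>UNIV. norm ((A *v x) $ i))" unfolding norm_vec_def by (rule L2_set_le_sum) simp
  also have "\<dots> \<le> (\<Sum>i\<in>UNIV. \<Sum>j\<in>UNIV. norm (A $ i $ j) * norm x)"
  proof (rule sum_mono)
    fix i
    have "norm ((A *v x) $ i) \<le> (\<Sum>j\<in>UNIV. norm (A $ i $ j * x $ j))"
      unfolding matrix_vector_mult_def by (simp add: norm_sum)
    also have "\<dots> \<le> (\<Sum>j\<in>UNIV. norm (A $ i $ j) * norm x)"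
    proof (rule sum_mono)
      fix j
      have "norm (A$i$j * x$j) = norm (A$i$j) * norm (x$j)" by (rule norm_mult)
      also have "\<dots> \<le> norm (A$i$j) * norm x" by (rule mult_left_mono[OF Finite_Cartesian_Product.norm_nth_le norm_ge_zero])
      finally show "norm (A$i$j * x$j) \<le> norm (A$i$j) * norm x" .
    qed
    finally show "norm ((A *v x) $ i) \<le> (\<Sum>j\<in>UNIV. norm (A $ i $ j) * norm x)" .
  qed
  also have "\<dots> = msum A * norm x" by (simp add: msum_def sum_distrib_right)
  finally show ?thesis .
qed

lemma qf_abs_le: "\<bar>qf A x\<bar> \<le> msum A * (norm x)^2"
proof -
  have "\<bar>qf A x\<bar> \<le> norm x * norm (A *v x)" unfolding qf_inner by (rule Cauchy_Schwarz_ineq2)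
  also have "\<dots> \<le> norm x * (msum A * norm x)" by (rule mult_left_mono[OF norm_mv_le]) simp
  finally show ?thesis by (simp add: power2_eq_square mult_ac)
qed

definition outer :: "complex^'n::finite \<Rightarrow> 'n cmat" where
  "outer b = (\<chi> i j. b $ i * cnj (b $ j))"

lemma outer_mv: "outer b *v x = (\<Sum>j\<in>UNIV. cnj (b $ j) * x $ j) *s b"
  by (simp add: outer_def matrix_vector_mult_def vec_eq_iff sum_distrib_left mult_ac)

lemma herm_outer: "hermitian (outer b)"
  by (simp add: hermitian_iff outer_def)

lemma qf_outer: "qf (outer b) x = (cmod (\<Sum>j\<in>UNIV. cnj (b $ j) * x $ j))^2"
proof -
  let ?s = "\<Sum>j\<in>UNIV. cnj (b $ j) * x $ j"
  have "cf (outer b) x x = (\<Sum>i\<in>UNIV. cnj (x$i) * b$i) * ?s"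
    by (simp add: cf_def outer_mv sum_distrib_right mult_ac)
  also have "(\<Sum>i\<in>UNIV. cnj (x$i) * b$i) = cnj ?s" by (simp add: mult.commute)
  finally have "cf (outer b) x x = cnj ?s * ?s" .
  moreover have "Re (cnj ?s * ?s) = (cmod ?s)^2"
  proof -
    have "cnj ?s * ?s = ?s * cnj ?s" by (rule mult.commute)
    also have "\<dots> = of_real ((cmod ?s)^2)" by (rule complex_norm_square[symmetric])
    finally show ?thesis by simp
  qed
  ultimately show ?thesis by (simp only: qf_def)
qed

lemma psd_outer: "psd (outer b)"
  by (simp add: psd_qf herm_outer qf_outer)

lemma hs_outer: "hs_inner (outer b) T = qf T b"
  by (simp add: hs_inner_inner inner_vec_def inner_complex_cnj outer_def qf_def cf_def
       matrix_vector_mult_def sum_distrib_left Re_sum mult_ac)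

lemma hs_one: "hs_inner (mat 1) T = Re (trace T)"
  by (simp add: hs_inner_def adj_one)



lemma subspace_ker: "subspace {x::complex^'n::finite. A *v x = 0}"
  by (simp add: subspace_def mv_vadd mv_vscaleR)

lemma psd_ker_sum:
  assumes "psd A" "psd B" "(A + B) *v x = 0"
  shows "A *v x = 0"
proof -
  have "qf (A + B) x = 0" using assms(3) by (simp add: qf_inner)
  hence "qf A x + qf B x = 0" by (simp add: qf_add_mat)
  moreover have "qf A x \<ge> 0" "qf B x \<ge> 0" using assms by (auto simp: psd_qf)
  ultimately have "qf A x = 0" by linarith
  thus ?thesis by (rule psd_ker[OF assms(1)])
qed

lemma cont_qf: fixes A :: "'n::finite cmat" shows "continuous_on X (qf A)"
proof -
  have "bounded_linear (\<lambda>x::complex^'n. A *v x)"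
    using linear_mv linear_conv_bounded_linear by blast
  hence "continuous_on X (\<lambda>x::complex^'n. A *v x)" by (rule linear_continuous_on)
  thus ?thesis unfolding qf_inner[abs_def] by (intro continuous_intros)
qed

lemma qf_decomp:
  assumes "hermitian A" "A *v y = 0"
  shows "qf A (y + z) = qf A z"
proof -
  have "cf A y y = 0" "cf A z y = 0" using assms(2) by (auto simp: cf_zero_right)
  moreover have "cf A y z = cnj (cf A z y)" by (rule cf_herm[OF assms(1)])
  ultimately show ?thesis by (simp add: qf_def cf_add_left cf_add_right)
qed

lemma psd_compare:
  assumes S: "psd S" and T: "psd T" and ker: "\<And>x. S *v x = 0 \<Longrightarrow> T *v x = 0"
  shows "\<exists>c>0. \<forall>x. qf T x \<le> c * qf S x"
proof -
  define K where "K = {x::complex^'a. S *v x = 0}"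
  define Sp where "Sp = sphere (0::complex^'a) 1 \<inter> (\<Inter>w\<in>K. {z. inner w z = 0})"
  have hS: "hermitian S" and hT: "hermitian T" using S T by (auto simp: psd_qf)
  have cSp: "compact Sp" unfolding Sp_def
    by (intro compact_Int_closed compact_sphere closed_INT ballI closed_hyperplane)
  obtain l where l: "l > 0" and lb: "\<And>z. z \<in> Sp \<Longrightarrow> l \<le> qf S z"
  proof (cases "Sp = {}")
    case True then show ?thesis using that[of 1] by auto
  next
    case False
    obtain z0 where z0: "z0 \<in> Sp" and m: "\<And>z. z \<in> Sp \<Longrightarrow> qf S z0 \<le> qf S z"
      using continuous_attains_inf[OF cSp False cont_qf] by blast
    have "qf S z0 \<noteq> 0"
    proof
      assume "qf S z0 = 0"
      hence "z0 \<in> K" using psd_ker[OF S] by (simp add: K_def)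
      hence "inner z0 z0 = 0" using z0 by (auto simp: Sp_def)
      thus False using z0 by (simp add: Sp_def)
    qed
    moreover have "qf S z0 \<ge> 0" using S by (simp add: psd_qf)
    ultimately show ?thesis using that[of "qf S z0"] m by auto
  qed
  have orth: "l * (norm z)^2 \<le> qf S z" if z: "\<forall>w\<in>K. inner w z = 0" for z
  proof (cases "z = 0")
    case True then show ?thesis by (simp add: qf_inner)
  next
    case False
    define u where "u = (1 / norm z) *\<^sub>R z"
    have "u \<in> Sp" using z False by (simp add: Sp_def u_def)
    hence "l \<le> qf S u" by (rule lb)
    also have "qf S u = qf S z / (norm z)^2" by (simp add: u_def qf_scaleR_vec power2_eq_square)
    finally show ?thesis using False by (simp add: field_simps)
  qed
  define c where "c = msum T / l + 1"
  have "msum T / l \<ge> 0" using l msum_nonneg[of T] by simp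
  hence c: "c > 0" by (simp add: c_def)
  have "qf T x \<le> c * qf S x" for x
  proof -
    obtain y z where y: "y \<in> span K" and z: "\<And>w. w \<in> span K \<Longrightarrow> orthogonal z w" and x: "x = y + z"
      using orthogonal_subspace_decomp_exists[of K x] by metis
    have "span K = K" unfolding K_def by (rule span_eq_iff[THEN iffD2, OF subspace_ker])
    hence yK: "y \<in> K" using y by (simp only:)
    have zo: "\<forall>w\<in>K. inner w z = 0" using z span_base by (metis orthogonal_def inner_commute)
    have e1: "qf S x = qf S z" using qf_decomp[OF hS] yK x by (simp add: K_def)
    have e2: "qf T x = qf T z" using qf_decomp[OF hT] yK x ker by (simp add: K_def)
    have "qf T z \<le> msum T * (norm z)^2" using qf_abs_le[of T z] by linarith
    also have "\<dots> = (msum T / l) * (l * (norm z)^2)" using l by simp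
    also have "\<dots> \<le> (msum T / l) * qf S z"
      by (rule mult_left_mono[OF orth[OF zo]]) (use l msum_nonneg[of T] in simp)
    also have "\<dots> \<le> c * qf S z"
      using S by (simp add: c_def psd_qf distrib_right)
    finally show ?thesis using e1 e2 by simp
  qed
  thus ?thesis using c by blast
qed



lemma trace_add': "trace (A + B) = trace A + trace (B :: 'n::finite cmat)"
  by (simp add: trace_def sum.distrib)
lemma trace_diff': "trace (A - B) = trace A - trace (B :: 'n::finite cmat)"
  by (simp add: trace_def sum_subtractf)
lemma trace_scaleR': "trace (c *\<^sub>R A) = of_real c * trace (A :: 'n::finite cmat)"
proof -
  have "trace (c *\<^sub>R A) = c *\<^sub>R trace A" by (simp add: trace_def scaleR_sum_right)
  thus ?thesis by (simp add: scaleR_conv_of_real)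
qed

lemma psd_add: "psd A \<Longrightarrow> psd B \<Longrightarrow> psd (A + B)"
  by (simp add: psd_qf herm_add qf_add_mat)
lemma psd_scaleR: "psd A \<Longrightarrow> c \<ge> 0 \<Longrightarrow> psd (c *\<^sub>R A)"
  by (simp add: psd_qf herm_scaleR qf_scaleR_mat)

lemma Dens_herm: "T \<in> Dens \<Longrightarrow> hermitian T" by (simp add: Dens_def psd_def)
lemma Dens_psd: "T \<in> Dens \<Longrightarrow> psd T" by (simp add: Dens_def)
lemma Dens_trace: "T \<in> Dens \<Longrightarrow> trace T = 1" by (simp add: Dens_def)

lemma Dens_comb:
  assumes "A \<in> Dens" "B \<in> Dens" "0 \<le> a" "a \<le> 1"
  shows "a *\<^sub>R A + (1 - a) *\<^sub>R B \<in> Dens"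
  using assms by (auto simp: Dens_def psd_add psd_scaleR trace_add' trace_scaleR' of_real_diff[symmetric])

lemma comb_diff: "a *\<^sub>R A + (1 - a) *\<^sub>R B - R = a *\<^sub>R (A - R) + (1 - a) *\<^sub>R (B - (R :: 'n::finite cmat))"
  by (simp add: algebra_simps)

lemma hs_adj: "hs_inner (adj X) Y = hs_inner X (adj Y)"
proof -
  have "hs_inner (adj X) Y = (\<Sum>i\<in>UNIV. \<Sum>j\<in>UNIV. Re (X$j$i * Y$i$j))"
    by (simp add: hs_inner_inner inner_vec_def adj_def inner_complex_cnj)
  also have "\<dots> = (\<Sum>j\<in>UNIV. \<Sum>i\<in>UNIV. Re (X$j$i * Y$i$j))" by (rule sum.swap)
  also have "\<dots> = hs_inner X (adj Y)"
    by (simp add: hs_inner_inner inner_vec_def adj_def inner_complex_cnj flip: complex_cnj_mult)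
  finally show ?thesis .
qed

lemma adj_adj: "adj (adj X) = X" by (simp add: adj_def vec_eq_iff)

lemma hs_sum_left: "finite S \<Longrightarrow> hs_inner (\<Sum>b\<in>S. M b) T = (\<Sum>b\<in>S. hs_inner (M b) T)"
  by (simp add: hs_inner_inner inner_sum_left)

lemma ext_lin_zero: "ext_linear D \<Longrightarrow> D 0 = 0"
proof -
  assume "ext_linear D"
  hence "D ((0::real) *\<^sub>R 0) = ereal 0 * D 0"
    by (simp add: ext_linear_def hermitian_def adj_def vec_eq_iff del: scaleR_zero_left scaleR_zero_right)
  thus ?thesis by (simp add: zero_ereal_def[symmetric])
qed

lemma ext_lin_scale: "ext_linear D \<Longrightarrow> hermitian v \<Longrightarrow> D (a *\<^sub>R v) = ereal a * D v"
  by (simp add: ext_linear_def)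

lemma ext_lin_comb_neg:
  assumes D: "ext_linear D" and hx: "hermitian x" and hy: "hermitian y"
    and x: "D x = -\<infinity>" and y: "D y \<noteq> \<infinity>" and a: "a > 0" and b: "b \<ge> 0"
  shows "D (a *\<^sub>R x + b *\<^sub>R y) = -\<infinity>"
proof -
  have 1: "D (a *\<^sub>R x) = -\<infinity>" using ext_lin_scale[OF D hx, of a] x a by simp
  have 2: "D (b *\<^sub>R y) \<noteq> \<infinity>" using ext_lin_scale[OF D hy, of b] y b
    by (cases "D y") (auto simp: ereal_mult_infty)
  have "{D (a *\<^sub>R x), D (b *\<^sub>R y)} \<noteq> {\<infinity>, -\<infinity>}" using 1 2 by (auto simp: doubleton_eq_iff)
  hence "D (a *\<^sub>R x + b *\<^sub>R y) = D (a *\<^sub>R x) + D (b *\<^sub>R y)"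
    using D hx hy by (simp add: ext_linear_def herm_scaleR)
  thus ?thesis using 1 2 by simp
qed

lemma ext_lin_comb_fin:
  assumes D: "ext_linear D" and hx: "hermitian x" and hy: "hermitian y"
    and x: "D x = ereal p" and y: "D y = ereal q"
  shows "D (a *\<^sub>R x + b *\<^sub>R y) = ereal (a * p + b * q)"
proof -
  have "{D (a *\<^sub>R x), D (b *\<^sub>R y)} \<noteq> {\<infinity>, -\<infinity>}"
    using ext_lin_scale[OF D hx, of a] ext_lin_scale[OF D hy, of b] x y by (auto simp: doubleton_eq_iff)
  hence "D (a *\<^sub>R x + b *\<^sub>R y) = D (a *\<^sub>R x) + D (b *\<^sub>R y)"
    using D hx hy by (simp add: ext_linear_def herm_scaleR)
  thus ?thesis using ext_lin_scale[OF D hx, of a] ext_lin_scale[OF D hy, of b] x y by simp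
qed



lemma face_structure:
  fixes r :: "'n::finite cmat"
  assumes r: "r \<in> Dens" and D: "ext_linear D" and np: "\<forall>t\<in>Dens. D (t - r) \<noteq> \<infinity>"
  shows "\<exists>P. psd P \<and> (\<forall>t\<in>Dens. 0 \<le> hs_inner P t \<and> (hs_inner P t = 0 \<longleftrightarrow> D (t - r) \<noteq> -\<infinity>))"
proof -
  define C where "C = {t\<in>Dens. D (t - r) \<noteq> -\<infinity>}"
  define ker where "ker = (\<lambda>A::'n cmat. {x. A *v x = 0})"
  have rC: "r \<in> C" using r ext_lin_zero[OF D] by (simp add: C_def)
  obtain s where sC: "s \<in> C" and smin: "\<And>t. t \<in> C \<Longrightarrow> dim (ker s) \<le> dim (ker t)"
    using ex_has_least_nat[of "\<lambda>t. t \<in> C" r "\<lambda>t. dim (ker t)"] rC by blast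
  have s: "s \<in> Dens" using sC by (simp add: C_def)
  have eq: "t \<in> C \<longleftrightarrow> ker s \<subseteq> ker t" if t: "t \<in> Dens" for t
  proof
    assume tC: "t \<in> C"
    define m where "m = (1/2::real) *\<^sub>R s + (1 - 1/2) *\<^sub>R t"
    have mD: "m \<in> Dens" unfolding m_def by (rule Dens_comb[OF s t]) auto
    have "D (m - r) \<noteq> -\<infinity>"
    proof -
      obtain p where p: "D (s - r) = ereal p" using sC np s by (cases "D (s - r)") (auto simp: C_def)
      obtain q where q: "D (t - r) = ereal q" using tC np t by (cases "D (t - r)") (auto simp: C_def)
      have hs: "hermitian (s - r)" "hermitian (t - r)" using herm_diff Dens_herm r s t by auto
      show ?thesis unfolding m_def comb_diff
        using ext_lin_comb_fin[OF D hs p q, of "1/2" "1 - 1/2"] by simp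
    qed
    hence mC: "m \<in> C" using mD by (simp add: C_def)
    have ps: "psd ((1/2::real) *\<^sub>R s)" "psd ((1/2::real) *\<^sub>R t)"
      using s t by (simp_all add: psd_scaleR Dens_psd)
    have k1: "ker m \<subseteq> ker s"
    proof
      fix x assume "x \<in> ker m"
      hence "((1/2::real) *\<^sub>R s) *v x = 0" using psd_ker_sum[OF ps] by (simp add: ker_def m_def)
      thus "x \<in> ker s" by (simp add: ker_def mv_scaleR)
    qed
    have k2: "ker m \<subseteq> ker t"
    proof
      fix x assume "x \<in> ker m"
      hence "((1/2::real) *\<^sub>R t) *v x = 0" using psd_ker_sum[OF ps(2,1)] by (simp add: ker_def m_def add.commute)
      thus "x \<in> ker t" by (simp add: ker_def mv_scaleR)
    qed
    have "ker m = ker s"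
      unfolding ker_def by (rule subspace_dim_equal[OF subspace_ker subspace_ker]) (use k1 smin[OF mC] in \<open>simp_all add: ker_def\<close>)
    thus "ker s \<subseteq> ker t" using k2 by simp
  next
    assume sub: "ker s \<subseteq> ker t"
    obtain c where c: "c > 0" and cle: "\<And>x. qf t x \<le> c * qf s x"
      using psd_compare[OF Dens_psd[OF s] Dens_psd[OF t]] sub by (auto simp: ker_def)
    define c' where "c' = max c 2"
    have c': "c' \<ge> 2" "\<And>x. qf t x \<le> c' * qf s x"
    proof -
      show "c' \<ge> 2" by (simp add: c'_def)
      fix x have "qf s x \<ge> 0" using Dens_psd[OF s] by (simp add: psd_qf)
      hence "c * qf s x \<le> c' * qf s x" by (simp add: c'_def mult_right_mono)
      thus "qf t x \<le> c' * qf s x" using cle[of x] by linarith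
    qed
    define a where "a = 1 / c'"
    have a: "0 < a" "a \<le> 1/2" using c' by (auto simp: a_def)
    define u where "u = (1 / (1 - a)) *\<^sub>R (s - a *\<^sub>R t)"
    have uD: "u \<in> Dens"
    proof -
      have "hermitian (s - a *\<^sub>R t)" using Dens_herm s t herm_diff herm_scaleR by blast
      moreover have "0 \<le> qf (s - a *\<^sub>R t) x" for x
      proof -
        have "a * qf t x \<le> a * (c' * qf s x)" using c'(2)[of x] a by (simp add: mult_left_mono)
        also have "\<dots> = qf s x" using c' by (simp add: a_def)
        finally show ?thesis by (simp add: qf_diff_mat qf_scaleR_mat)
      qed
      ultimately have "psd (s - a *\<^sub>R t)" by (simp add: psd_qf)
      hence "psd u" unfolding u_def by (rule psd_scaleR) (use a in simp)
      moreover have "trace u = 1"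
        using a Dens_trace[OF s] Dens_trace[OF t]
        by (simp add: u_def trace_scaleR' trace_diff' field_simps of_real_diff[symmetric])
      ultimately show ?thesis by (simp add: Dens_def)
    qed
    have seq: "s = a *\<^sub>R t + (1 - a) *\<^sub>R u" using a by (simp add: u_def)
    show "t \<in> C"
    proof (rule ccontr)
      assume "t \<notin> C"
      hence "D (t - r) = -\<infinity>" using t by (simp add: C_def)
      moreover have "hermitian (t - r)" "hermitian (u - r)" using herm_diff Dens_herm r t uD by auto
      moreover have "D (u - r) \<noteq> \<infinity>" using np uD by blast
      moreover have "0 \<le> 1 - a" using a by simp
      ultimately have "D (a *\<^sub>R (t - r) + (1 - a) *\<^sub>R (u - r)) = -\<infinity>"
        using ext_lin_comb_neg[OF D _ _ _ _ a(1)] by blast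
      hence "D (s - r) = -\<infinity>" using seq comb_diff by metis
      thus False using sC by (simp add: C_def)
    qed
  qed
  obtain B where B: "B \<subseteq> ker s" "independent B" "ker s \<subseteq> span B" "card B = dim (ker s)"
    by (rule basis_exists)
  have fB: "finite B" using B(2) by (rule finiteI_independent)
  define P where "P = (\<Sum>b\<in>B. outer b)"
  have psdP: "psd P" unfolding P_def
    by (simp add: psd_qf herm_sum[OF fB] herm_outer qf_sum_mat[OF fB] sum_nonneg qf_outer)
  have hsP: "hs_inner P t = (\<Sum>b\<in>B. qf t b)" for t by (simp add: P_def hs_sum_left[OF fB] hs_outer)
  have "0 \<le> hs_inner P t \<and> (hs_inner P t = 0 \<longleftrightarrow> D (t - r) \<noteq> -\<infinity>)" if t: "t \<in> Dens" for t
  proof -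
    have qn: "\<And>b. 0 \<le> qf t b" using Dens_psd[OF t] by (simp add: psd_qf)
    have "hs_inner P t = 0 \<longleftrightarrow> (\<forall>b\<in>B. qf t b = 0)" unfolding hsP by (rule sum_nonneg_eq_0_iff[OF fB qn])
    also have "\<dots> \<longleftrightarrow> (\<forall>b\<in>B. t *v b = 0)" using psd_ker[OF Dens_psd[OF t]] by (auto simp: qf_inner)
    also have "\<dots> \<longleftrightarrow> ker s \<subseteq> ker t"
    proof
      assume "\<forall>b\<in>B. t *v b = 0"
      hence "span B \<subseteq> ker t" using span_minimal[of B "ker t"] subspace_ker by (auto simp: ker_def)
      thus "ker s \<subseteq> ker t" using B(3) by blast
    next
      assume "ker s \<subseteq> ker t" thus "\<forall>b\<in>B. t *v b = 0" using B(1) by (auto simp: ker_def)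
    qed
    also have "\<dots> \<longleftrightarrow> D (t - r) \<noteq> -\<infinity>" using eq[OF t] t by (simp add: C_def)
    finally show ?thesis using hsP qn by (simp add: sum_nonneg)
  qed
  thus ?thesis using psdP by blast
qed



lemma finite_part:
  fixes D :: "'n::finite cmat \<Rightarrow> ereal"
  assumes D: "ext_linear D"
  shows "\<exists>H. hermitian H \<and> (\<forall>v. hermitian v \<longrightarrow> \<bar>D v\<bar> \<noteq> \<infinity> \<longrightarrow> D v = ereal (hs_inner H v))"
proof -
  define L where "L = {v::'n cmat. hermitian v \<and> \<bar>D v\<bar> \<noteq> \<infinity>}"
  define l0 where "l0 = (\<lambda>v. real_of_ereal (D v))"
  have Lfin: "v \<in> L \<Longrightarrow> D v = ereal (l0 v)" for v by (auto simp: L_def l0_def ereal_real)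
  have Lsub: "subspace L"
    unfolding subspace_def
  proof (intro conjI ballI allI)
    show "0 \<in> L" using ext_lin_zero[OF D] by (simp add: L_def hermitian_def adj_def vec_eq_iff)
  next
    fix x y assume x: "x \<in> L" and y: "y \<in> L"
    have hx: "hermitian x" and hy: "hermitian y" using x y by (auto simp: L_def)
    have "D (x + y) = ereal (l0 x + l0 y)"
      using ext_lin_comb_fin[OF D hx hy Lfin[OF x] Lfin[OF y], of 1 1] by simp
    thus "x + y \<in> L" using x y by (simp add: L_def herm_add)
  next
    fix c x assume x: "x \<in> L"
    thus "c *\<^sub>R x \<in> L" using ext_lin_scale[OF D, of x c] Lfin[OF x] by (simp add: L_def herm_scaleR)
  qed
  obtain B where B: "B \<subseteq> L" "independent B" "L \<subseteq> span B" "card B = dim L"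
    by (rule basis_exists)
  obtain g where g: "linear g" "\<And>x. x \<in> B \<Longrightarrow> g x = l0 x"
    using linear_independent_extend[OF B(2), of l0] by blast
  have gl: "\<forall>v\<in>L. g v = l0 v"
  proof -
    define M where "M = {v\<in>L. g v = l0 v}"
    have "subspace M"
      unfolding subspace_def
    proof (intro conjI ballI allI)
      show "0 \<in> M" using Lsub ext_lin_zero[OF D] linear_0[OF g(1)]
        by (simp add: M_def subspace_0 l0_def)
    next
      fix x y assume x: "x \<in> M" and y: "y \<in> M"
      have xL: "x \<in> L" and yL: "y \<in> L" using x y by (auto simp: M_def)
      have hx: "hermitian x" and hy: "hermitian y" using xL yL by (auto simp: L_def)
      have "D (x + y) = ereal (l0 x + l0 y)"
        using ext_lin_comb_fin[OF D hx hy Lfin[OF xL] Lfin[OF yL], of 1 1] by simp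
      hence "l0 (x + y) = l0 x + l0 y" by (simp add: l0_def)
      thus "x + y \<in> M" using x y Lsub linear_add[OF g(1)] by (simp add: M_def subspace_add)
    next
      fix c x assume x: "x \<in> M"
      have xL: "x \<in> L" using x by (simp add: M_def)
      have "D (c *\<^sub>R x) = ereal (c * l0 x)"
        using ext_lin_scale[OF D, of x c] Lfin[OF xL] xL by (simp add: L_def)
      hence "l0 (c *\<^sub>R x) = c * l0 x" by (simp add: l0_def)
      thus "c *\<^sub>R x \<in> M" using x Lsub linear_scale[OF g(1)] by (simp add: M_def subspace_scale)
    qed
    moreover have "B \<subseteq> M" using B(1) g(2) by (auto simp: M_def)
    ultimately have "span B \<subseteq> M" by (rule span_minimal[rotated])
    thus ?thesis using B(3) by (auto simp: M_def)
  qed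
  define A0 where "A0 = adjoint g 1"
  have gA: "g x = hs_inner A0 x" for x
    using adjoint_works[OF g(1), of x 1] by (simp add: A0_def hs_inner_inner inner_commute)
  define H where "H = (1/2::real) *\<^sub>R (A0 + adj A0)"
  have hH: "hermitian H" by (simp add: H_def hermitian_def adj_scaleR adj_add adj_adj add.commute)
  have "hs_inner H v = hs_inner A0 v" if "hermitian v" for v
  proof -
    have "hs_inner (adj A0) v = hs_inner A0 (adj v)" by (rule hs_adj)
    also have "adj v = v" using that by (simp add: hermitian_def)
    finally have e: "hs_inner (adj A0) v = hs_inner A0 v" .
    have "hs_inner H v = (1/2) * (hs_inner A0 v + hs_inner (adj A0) v)"
      by (simp add: H_def hs_inner_inner inner_add_left)
    thus ?thesis using e by simp
  qed
  note HA = this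
  have "\<forall>v. hermitian v \<longrightarrow> \<bar>D v\<bar> \<noteq> \<infinity> \<longrightarrow> D v = ereal (hs_inner H v)"
  proof (intro allI impI)
    fix v assume hv: "hermitian v" and fv: "\<bar>D v\<bar> \<noteq> \<infinity>"
    have vL: "v \<in> L" using hv fv by (simp add: L_def)
    have "D v = ereal (l0 v)" by (rule Lfin[OF vL])
    also have "l0 v = g v" using gl vL by simp
    also have "g v = hs_inner H v" using gA HA[OF hv] by simp
    finally show "D v = ereal (hs_inner H v)" .
  qed
  thus ?thesis using hH by blast
qed



lemma meas_exists:
  fixes r :: "'n::finite cmat"
  assumes r: "r \<in> Dens" and D: "ext_linear D" and np: "\<forall>t\<in>Dens. D (t - r) \<noteq> \<infinity>"
  shows "\<exists>M sc. is_measurement M \<and>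
     (\<forall>t\<in>Dens. (\<Sum>y\<in>fst M. ereal (hs_inner (snd M y) t) * sc y) = ereal c0 + D (t - r))"
proof -
  obtain P where psdP: "psd P" and Pt: "\<And>t. t \<in> Dens \<Longrightarrow> 0 \<le> hs_inner P t \<and> (hs_inner P t = 0 \<longleftrightarrow> D (t - r) \<noteq> -\<infinity>)"
    using face_structure[OF r D np] by blast
  obtain H where hH: "hermitian H" and Hv: "\<And>v. hermitian v \<Longrightarrow> \<bar>D v\<bar> \<noteq> \<infinity> \<Longrightarrow> D v = ereal (hs_inner H v)"
    using finite_part[OF D] by blast
  define N where "N = 1 + msum H"
  define NP where "NP = 1 + msum P"
  have N: "N \<ge> 1" "NP \<ge> 1" using msum_nonneg[of H] msum_nonneg[of P] by (auto simp: N_def NP_def)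
  define E0 where "E0 = (1/(2*NP)) *\<^sub>R P"
  define K where "K = (1/(4*N)) *\<^sub>R (H + N *\<^sub>R mat 1)"
  define E1 where "E1 = mat 1 - E0 - K"
  define mu where "mu = (\<lambda>y::nat. if y = 0 then E0 else if y = 1 then E1 else K)"
  define c1 where "c1 = c0 - hs_inner H r"
  define sc where "sc = (\<lambda>y::nat. if y = 0 then -\<infinity> else if y = 1 then ereal (c1 - N) else ereal (c1 + 3*N))"
  have hP: "hermitian P" using psdP by (simp add: psd_qf)
  have hE0: "hermitian E0" using hP by (simp add: E0_def herm_scaleR)
  have hK: "hermitian K" using hH by (simp add: K_def herm_scaleR herm_add herm_one)
  have hE1: "hermitian E1" using hE0 hK by (simp add: E1_def herm_diff herm_one)
  have qE0: "qf E0 x = qf P x / (2*NP)" for x by (simp add: E0_def qf_scaleR_mat)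
  have qK: "qf K x = (qf H x + N * (norm x)^2) / (4*N)" for x
    by (simp add: K_def qf_scaleR_mat qf_add_mat qf_one)
  have qE1: "qf E1 x = (norm x)^2 - qf E0 x - qf K x" for x by (simp add: E1_def qf_diff_mat qf_one)
  have Hb: "\<bar>qf H x\<bar> \<le> N * (norm x)^2" for x
    using qf_abs_le[of H x] by (simp add: N_def distrib_right) (smt (verit) zero_le_power2)
  have Pb: "qf P x \<le> NP * (norm x)^2" for x
    using qf_abs_le[of P x] by (simp add: NP_def distrib_right) (smt (verit) zero_le_power2)
  have Pp: "0 \<le> qf P x" for x using psdP by (simp add: psd_qf)
  have psdE0: "psd E0" using psdP N by (simp add: E0_def psd_scaleR)
  have psdK: "psd K" unfolding psd_qf
  proof (intro conjI allI hK)
    fix x show "0 \<le> qf K x" using Hb[of x] N by (simp add: qK)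
  qed
  have psdE1: "psd E1" unfolding psd_qf
  proof (intro conjI allI hE1)
    fix x
    have a: "qf E0 x \<le> (norm x)^2 / 2" using Pb[of x] N by (simp add: qE0 field_simps)
    have b: "qf K x \<le> (norm x)^2 / 2" using Hb[of x] N by (simp add: qK field_simps)
    show "0 \<le> qf E1 x" using a b by (simp add: qE1)
  qed
  have meas: "is_measurement ({0,1,2}, mu)"
    using psdE0 psdE1 psdK by (simp add: is_measurement_def mu_def E1_def)
  have "(\<Sum>y\<in>{0,1,2}. ereal (hs_inner (mu y) t) * sc y) = ereal c0 + D (t - r)" if t: "t \<in> Dens" for t
  proof -
    have h1: "hs_inner (mat 1) t = 1" using Dens_trace[OF t] by (simp add: hs_one)
    have e0: "hs_inner E0 t = hs_inner P t / (2*NP)" by (simp add: E0_def hs_inner_inner)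
    have k: "hs_inner K t = (hs_inner H t + N) / (4*N)"
      using h1 by (simp add: K_def hs_inner_inner inner_add_left)
    have e1: "hs_inner E1 t = 1 - hs_inner E0 t - hs_inner K t"
      using h1 by (simp add: E1_def hs_inner_inner inner_diff_left)
    have sum3: "(\<Sum>y\<in>{0,1,2}. ereal (hs_inner (mu y) t) * sc y) =
       ereal (hs_inner E0 t) * (-\<infinity>) + (ereal (hs_inner E1 t * (c1 - N)) + ereal (hs_inner K t * (c1 + 3*N)))"
      by (simp add: mu_def sc_def)
    show ?thesis
    proof (cases "D (t - r) = -\<infinity>")
      case True
      hence "hs_inner P t > 0" using Pt[OF t] by (simp add: less_le)
      hence "hs_inner E0 t > 0" using N by (simp add: e0)
      hence m: "ereal (hs_inner E0 t) * (-\<infinity>) = -\<infinity>" by simp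
      show ?thesis unfolding sum3 m True by simp
    next
      case False
      hence "hs_inner P t = 0" using Pt[OF t] by simp
      hence z: "hs_inner E0 t = 0" by (simp add: e0)
      have "\<bar>D (t - r)\<bar> \<noteq> \<infinity>" using False np t by auto
      hence Dv: "D (t - r) = ereal (hs_inner H t - hs_inner H r)"
      proof -
        have "hermitian (t - r)" using herm_diff Dens_herm t r by blast
        hence "D (t - r) = ereal (hs_inner H (t - r))" by (rule Hv) fact
        thus ?thesis by (simp add: hs_inner_inner inner_diff_right)
      qed
      have "hs_inner E1 t * (c1 - N) + hs_inner K t * (c1 + 3*N) = c0 + (hs_inner H t - hs_inner H r)"
        using N by (simp add: e1 z k c1_def field_simps)
      thus ?thesis using sum3 z Dv by simp
    qed
  qed
  thus ?thesis using meas by (intro exI[of _ "({0,1,2}, mu)"] exI[of _ sc]) simp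
qed



theorem corollary3p6:
  fixes F :: "'n::finite cmat \<Rightarrow> real"
    and d :: "'n cmat \<Rightarrow> 'n cmat \<Rightarrow> ereal"
  assumes "convex_on Dens F"
    and "selection_ext_subgradients F d"
  shows "\<exists>(s :: 'n cmat \<Rightarrow> nat \<Rightarrow> ereal) (\<mu> :: 'n cmat \<Rightarrow> 'n meas).
           is_quantum_score s \<mu> \<and> truthful s \<mu> \<and>
           (\<forall>\<rho>\<in>Dens. \<forall>\<rho>'\<in>Dens. expected_score s \<mu> \<rho>' \<rho> = ereal (F \<rho>') + d \<rho>' (\<rho> - \<rho>'))"
proof -
  have sub: "\<And>r. r \<in> Dens \<Longrightarrow> ext_linear (d r) \<and> (\<forall>t\<in>Dens. ereal (F t) \<ge> ereal (F r) + d r (t - r))"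
    and np: "\<And>r. r \<in> Dens \<Longrightarrow> \<forall>t\<in>Dens. d r (t - r) \<noteq> \<infinity>"
    using assms(2) by (auto simp: selection_ext_subgradients_def ext_subdiff_def)
  define Q where "Q = (\<lambda>r M sc. is_measurement M \<and>
     (\<forall>t\<in>Dens. (\<Sum>y\<in>fst M. ereal (hs_inner (snd M y) t) * sc y) = ereal (F r) + d r (t - r)))"
  have ex: "\<exists>M sc. Q r M sc" if "r \<in> Dens" for r
    unfolding Q_def using meas_exists[OF that conjunct1[OF sub[OF that]] np[OF that]] by blast
  define Mf where "Mf = (\<lambda>r. SOME M. \<exists>sc. Q r M sc)"
  define scf where "scf = (\<lambda>r. SOME sc. Q r (Mf r) sc)"
  have Qr: "Q r (Mf r) (scf r)" if "r \<in> Dens" for r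
  proof -
    have "\<exists>sc. Q r (Mf r) sc" unfolding Mf_def using someI_ex[OF ex[OF that]] .
    thus ?thesis unfolding scf_def by (rule someI_ex)
  qed
  have eq: "\<forall>\<rho>\<in>Dens. \<forall>\<rho>'\<in>Dens. expected_score scf Mf \<rho>' \<rho> = ereal (F \<rho>') + d \<rho>' (\<rho> - \<rho>')"
    using Qr by (simp add: expected_score_def Q_def)
  have qs: "is_quantum_score scf Mf" using Qr by (simp add: is_quantum_score_def Q_def)
  have tr: "truthful scf Mf"
    unfolding truthful_def
  proof (intro ballI)
    fix \<rho> \<rho>' :: "'n cmat" assume a: "\<rho> \<in> Dens" "\<rho>' \<in> Dens"
    have "expected_score scf Mf \<rho>' \<rho> = ereal (F \<rho>') + d \<rho>' (\<rho> - \<rho>')" using eq a by blast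
    also have "\<dots> \<le> ereal (F \<rho>)" using sub[OF a(2)] a(1) by blast
    also have "\<dots> = expected_score scf Mf \<rho> \<rho>"
      using eq a ext_lin_zero[OF conjunct1[OF sub[OF a(1)]]] by simp
    finally show "expected_score scf Mf \<rho>' \<rho> \<le> expected_score scf Mf \<rho> \<rho>" .
  qed
  show ?thesis using eq qs tr by blast
qed


end
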